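(* Assume $W$ satisfies (h) and (h* ) as in the context. The set \[ C:=\Big\{c>0:\ \text{there exists } L\ge1 \text{ with } \inf_{V\in\mathcal{X}_L}E_c(V)<0\Big\} \] is open and non-empty, and $\sup C\le \sqrt{2W^-(a^-)}\,/\,d_0$, where $d_0:=\lim_{\alpha\to0^+}\mathrm{dist}\big(\mathcal{C}^-_\alpha,\overline{\mathbb{B}}(a^+,r_0)\big)$.
   Context: $W\in C^2_{\mathrm{loc}}(\mathbb{R}^N)$, $W^-:=\max\{-W,0\}$. Hypothesis (h* ): $a^\pm$ are minima, $W(a^-)<0=W(a^+)$, $\min W=W(a^-)$; there is $\alpha_0>0$ such that for every $\alpha\in(0,\alpha_0]$, $W^{-1}(\{\alpha\})=\partial\mathcal{C}^-_\alpha\cup\partial\mathcal{C}^+_\alpha$, $\{W\le\alpha\}=\mathcal{C}^-_\alpha\cup\mathcal{C}^+_\alpha$, with $\mathcal{C}^\pm_\alpha$ disjoint compact convex sets with $C^2$ boundaries containing $a^\pm$; with $\mathcal{C}^-_0$ the component of $\{W\le0\}$ containing $a^-$ and $n$ its outward normal, $\nabla W\cdot n\ge c_0>0$ and $D^2W\ge c_0I$ on $\partial\mathcal{C}^-_0$; and $r\mapsto W(a^-+r\xi)$ has strictly positive derivative for $r>0$ while $a^-+r\xi\in\mathcal{C}^-_{\alpha_0}$, $|\xi|=1$. Hypothesis (h): there is $R_0>0$ with $\frac{d}{dr}W(a^\pm+r\xi)>0$ for $r\in(0,R_0)$, $|\xi|=1$. $r_0\in(0,R_0)$ with $W\ge0$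 on $\{|u-a^+|\le r_0\}$, $W<0$ on $\{|u-a^-|\le r_0\}$. $E_c(U):=\int_{\mathbb{R}}(\tfrac12|U_x|^2+W(U))e^{cx}dx$; $\mathcal{X}_L:=\{U\in[H^1_{\mathrm{loc}}(\mathbb{R})]^N: |U(x)-a^+|\le r_0\ (x\ge L),\ |U(x)-a^-|\le r_0\ (x\le-L)\}$. *)

theory Defs
  imports "HOL-Analysis.Analysis"
begin

definition grad :: "('a::euclidean_space \<Rightarrow> real) \<Rightarrow> 'a \<Rightarrow> 'a" where
  "grad f x = (\<Sum>i\<in>Basis. frechet_derivative f (at x) i *\<^sub>R i)"

definition hess :: "('a::euclidean_space \<Rightarrow> real) \<Rightarrow> 'a \<Rightarrow> 'a \<Rightarrow> 'a" where
  "hess f x = frechet_derivative (grad f) (at x)"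

definition C2 :: "('a::euclidean_space \<Rightarrow> real) \<Rightarrow> bool" where
  "C2 f \<longleftrightarrow> (\<forall>x. f differentiable (at x)) \<and> (\<forall>x. grad f differentiable (at x))
            \<and> (\<forall>v. continuous_on UNIV (\<lambda>x. hess f x v))"

definition C2_boundary :: "'a::euclidean_space set \<Rightarrow> bool" where
  "C2_boundary S \<longleftrightarrow> (\<forall>p\<in>frontier S. \<exists>r>0. \<exists>g. C2 g \<and> grad g p \<noteq> 0 \<and>
      S \<inter> ball p r = {u \<in> ball p r. g u \<le> 0})"

definition outward_normal :: "'a::euclidean_space set \<Rightarrow> 'a \<Rightarrow> 'a \<Rightarrow> bool" where
  "outward_normal S p n \<longleftrightarrow> p \<in> frontier S \<and> norm n = 1 \<and> (\<forall>q\<in>S. n \<bullet> (q - p) \<le> 0)"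

definition negpart :: "real \<Rightarrow> real" where
  "negpart t = max (- t) 0"

text \<open>H^1_loc(R; R^N), represented by a continuous representative U together with its
  (weak) derivative U': U is locally absolutely continuous with locally square-integrable
  derivative U'.\<close>
definition H1loc :: "(real \<Rightarrow> 'a::euclidean_space) \<Rightarrow> (real \<Rightarrow> 'a) \<Rightarrow> bool" where
  "H1loc U U' \<longleftrightarrow> (\<forall>a b. U' absolutely_integrable_on {a..b}
      \<and> (\<lambda>t. (norm (U' t))\<^sup>2) integrable_on {a..b}
      \<and> (a \<le> b \<longrightarrow> (U' has_integral (U b - U a)) {a..b}))"

text \<open>The energy E_c(U) = \<integral> (1/2 |U_x|^2 + W(U)) e^{cx} dx, as an extended real
  (positive part minus negative part of the integrand).\<close>
definition energy :: "('a::euclidean_space \<Rightarrow> real) \<Rightarrow> real \<Rightarrow> (real \<Rightarrow> 'a) \<Rightarrow> (real \<Rightarrow> 'a) \<Rightarrow> ereal" where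
  "energy W c U U' =
     (let f = (\<lambda>x. ((1/2) * (norm (U' x))\<^sup>2 + W (U x)) * exp (c * x)) in
      enn2ereal (\<integral>\<^sup>+ x. ennreal (max 0 (f x)) \<partial>lborel)
      - enn2ereal (\<integral>\<^sup>+ x. ennreal (max 0 (- f x)) \<partial>lborel))"

definition XL :: "'a::euclidean_space \<Rightarrow> 'a \<Rightarrow> real \<Rightarrow> real \<Rightarrow> (real \<Rightarrow> 'a) set" where
  "XL am ap r0 L = {U. (\<forall>x\<ge>L. norm (U x - ap) \<le> r0) \<and> (\<forall>x\<le>-L. norm (U x - am) \<le> r0)}"

definition inf_energy :: "('a::euclidean_space \<Rightarrow> real) \<Rightarrow> 'a \<Rightarrow> 'a \<Rightarrow> real \<Rightarrow> real \<Rightarrow> real \<Rightarrow> ereal" where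
  "inf_energy W am ap r0 c L =
     Inf {energy W c V V' | V V'. H1loc V V' \<and> V \<in> XL am ap r0 L}"

end

theory Submission
  imports Defs
begin


lemma C2_cont: "C2 W \<Longrightarrow> continuous_on UNIV W"
  unfolding C2_def by (meson differentiable_at_imp_differentiable_on differentiable_imp_continuous_on)

lemma C2_diff: "C2 W \<Longrightarrow> W differentiable (at x)"
  unfolding C2_def by blast

lemma ray_pos:
  fixes W :: "'a::euclidean_space \<Rightarrow> real"
  assumes C: "C2 W" and r: "0 < r" "r < R0"
    and h: "\<forall>\<xi> r. norm \<xi> = 1 \<and> r \<in> {0<..<R0} \<longrightarrow> deriv (\<lambda>s. W (ap + s *\<^sub>R \<xi>)) r > 0"
    and xi: "norm \<xi> = 1"
  shows "W (ap + r *\<^sub>R \<xi>) > W ap"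
proof -
  define \<phi> where "\<phi> = (\<lambda>s. W (ap + s *\<^sub>R \<xi>))"
  have d: "\<phi> differentiable (at s)" for s
    unfolding \<phi>_def
    by (rule differentiable_compose[of W, unfolded o_def], rule C2_diff[OF C]) (intro derivative_intros)
  have cont: "continuous_on {0..r} \<phi>"
    using d by (simp add: differentiable_at_imp_differentiable_on differentiable_imp_continuous_on)
  obtain l z where lz: "0 < z" "z < r" "DERIV \<phi> z :> l" "\<phi> r - \<phi> 0 = (r - 0) * l"
    using MVT[OF r(1) cont] d by blast
  have "deriv \<phi> z = l" using lz(3) by (rule DERIV_imp_deriv)
  then have z: "0 < z" "z < r" "\<phi> r - \<phi> 0 = r * deriv \<phi> z" using lz by auto
  have "deriv \<phi> z > 0" using h xi z r unfolding \<phi>_def by auto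
  with z r have "\<phi> r > \<phi> 0" by (smt (verit) mult_pos_pos)
  then show ?thesis unfolding \<phi>_def by simp
qed

lemma sphere_min:
  fixes W :: "'a::euclidean_space \<Rightarrow> real"
  assumes C: "C2 W" and r: "0 < r0" "r0 < R0" and Wap: "W ap = 0"
    and h: "\<forall>\<xi> r. norm \<xi> = 1 \<and> r \<in> {0<..<R0} \<longrightarrow> deriv (\<lambda>s. W (ap + s *\<^sub>R \<xi>)) r > 0"
  shows "\<exists>m>0. \<forall>u\<in>sphere ap r0. m \<le> W u"
proof -
  have pos: "W u > 0" if "u \<in> sphere ap r0" for u
  proof -
    define \<xi> where "\<xi> = (1/r0) *\<^sub>R (u - ap)"
    have n: "norm \<xi> = 1" using that r unfolding \<xi>_def by (simp add: dist_norm norm_minus_commute)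
    have "u = ap + r0 *\<^sub>R \<xi>" using r unfolding \<xi>_def by simp
    then show ?thesis using ray_pos[OF C r h n] Wap by simp
  qed
  have ne: "sphere ap r0 \<noteq> {}" using r by simp
  obtain u where u: "u \<in> sphere ap r0" "\<forall>v\<in>sphere ap r0. W u \<le> W v"
    using continuous_attains_inf[OF compact_sphere ne, of W] C2_cont[OF C]
    by (meson continuous_on_subset top_greatest)
  then show ?thesis using pos[OF u(1)] by blast
qed

locale sets_loc =
  fixes W :: "'a::euclidean_space \<Rightarrow> real" and am ap :: 'a and Cm Cp :: "real \<Rightarrow> 'a set" and \<alpha>0 :: real
  assumes sets: "\<forall>\<alpha>\<in>{0<..\<alpha>0}.
        W -` {\<alpha>} = frontier (Cm \<alpha>) \<union> frontier (Cp \<alpha>)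
      \<and> {u. W u \<le> \<alpha>} = Cm \<alpha> \<union> Cp \<alpha>
      \<and> Cm \<alpha> \<inter> Cp \<alpha> = {}
      \<and> compact (Cm \<alpha>) \<and> compact (Cp \<alpha>) \<and> convex (Cm \<alpha>) \<and> convex (Cp \<alpha>)
      \<and> C2_boundary (Cm \<alpha>) \<and> C2_boundary (Cp \<alpha>)
      \<and> am \<in> Cm \<alpha> \<and> ap \<in> Cp \<alpha>"
begin

lemma nested:
  assumes "0 < \<alpha>" "\<alpha> \<le> \<beta>" "\<beta> \<le> \<alpha>0"
  shows "Cm \<alpha> \<subseteq> Cm \<beta>"
proof -
  have A: "{u. W u \<le> \<alpha>} = Cm \<alpha> \<union> Cp \<alpha>" "convex (Cm \<alpha>)" "am \<in> Cm \<alpha>"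
    using sets assms by auto
  have B: "{u. W u \<le> \<beta>} = Cm \<beta> \<union> Cp \<beta>" "Cm \<beta> \<inter> Cp \<beta> = {}" "compact (Cm \<beta>)" "compact (Cp \<beta>)"
     "am \<in> Cm \<beta>"
    using sets assms by auto
  have "Cm \<alpha> \<subseteq> {u. W u \<le> \<alpha>}" using A(1) by blast
  also have "\<dots> \<subseteq> {u. W u \<le> \<beta>}" using assms by auto
  finally have sub: "Cm \<alpha> \<subseteq> Cm \<beta> \<union> Cp \<beta>" using B(1) by blast
  have conn: "connected (Cm \<alpha>)" using A(2) convex_connected by blast
  show ?thesis
  proof (rule ccontr)
    assume "\<not> ?thesis"
    then have "Cp \<beta> \<inter> Cm \<alpha> \<noteq> {}" using sub by blast
    moreover have "Cm \<beta> \<inter> Cm \<alpha> \<noteq> {}" using A(3) B(5) by blast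
    ultimately have "closed (Cm \<beta>) \<and> closed (Cp \<beta>) \<and> Cm \<alpha> \<subseteq> Cm \<beta> \<union> Cp \<beta> \<and> Cm \<beta> \<inter> Cp \<beta> \<inter> Cm \<alpha> = {}
       \<and> Cm \<beta> \<inter> Cm \<alpha> \<noteq> {} \<and> Cp \<beta> \<inter> Cm \<alpha> \<noteq> {}"
      using sub B(2) compact_imp_closed[OF B(3)] compact_imp_closed[OF B(4)] by blast
    then show False using conn unfolding connected_closed by blast
  qed
qed

end

locale geo = sets_loc +
  fixes m r0 :: real
  assumes m_pos: "m > 0" and sph: "\<forall>u\<in>sphere ap r0. m \<le> W u"
    and r0p: "\<forall>u\<in>cball ap r0. W u \<ge> 0" and Wam: "W am < 0" and a0: "\<alpha>0 > 0" and r0pos: "r0 > 0"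
begin

lemma amn: "am \<notin> cball ap r0"
proof
  assume "am \<in> cball ap r0" then have "W am \<ge> 0" using r0p by blast
  with Wam show False by simp
qed

lemma r0nn: "r0 \<ge> 0" using r0pos by simp

lemma cball_front: "frontier (cball ap r0) = sphere ap r0"
  by simp

lemma neg_in_Cm:
  assumes u: "W u < 0" and al: "0 < \<alpha>" "\<alpha> \<le> \<alpha>0"
  shows "u \<in> Cm \<alpha>"
proof -
  define a where "a = min \<alpha> (m/2)"
  have a: "0 < a" "a \<le> \<alpha>" "a \<le> \<alpha>0" "a < m" using al m_pos unfolding a_def by auto
  have S: "{u. W u \<le> a} = Cm a \<union> Cp a" "convex (Cp a)" "ap \<in> Cp a"
    using sets a by auto
  have "u \<in> Cm a \<union> Cp a" using S(1) u a by auto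
  moreover have "u \<notin> Cp a"
  proof
    assume uc: "u \<in> Cp a"
    have "u \<notin> cball ap r0"
    proof
      assume "u \<in> cball ap r0" then have "W u \<ge> 0" using r0p by blast
      with u show False by simp
    qed
    have "Cp a \<inter> frontier (cball ap r0) \<noteq> {}"
    proof (rule connected_Int_frontier)
      show "connected (Cp a)" using S(2) convex_connected by blast
      show "Cp a \<inter> cball ap r0 \<noteq> {}" using r0nn S(3) by (metis IntI centre_in_cball empty_iff)
      show "Cp a - cball ap r0 \<noteq> {}" using uc \<open>u \<notin> cball ap r0\<close> by blast
    qed
    then obtain v where "v \<in> Cp a \<inter> sphere ap r0" unfolding cball_front by blast
    then have v: "v \<in> Cp a" "v \<in> sphere ap r0" by auto
    have "W v \<le> a" using v(1) S(1) by blast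
    moreover have "m \<le> W v" using sph v(2) by blast
    ultimately show False using a by linarith
  qed
  ultimately have "u \<in> Cm a" by blast
  then show ?thesis using nested[OF a(1) a(2) al(2)] by blast
qed

lemma Cm_disj:
  assumes al: "0 < \<alpha>" "\<alpha> \<le> \<alpha>0" "\<alpha> < m"
  shows "setdist (Cm \<alpha>) (cball ap r0) > 0"
proof -
  have S: "{u. W u \<le> \<alpha>} = Cm \<alpha> \<union> Cp \<alpha>" "convex (Cm \<alpha>)" "am \<in> Cm \<alpha>" "compact (Cm \<alpha>)"
    using sets al by auto
  have disj: "Cm \<alpha> \<inter> cball ap r0 = {}"
  proof (rule ccontr)
    assume "Cm \<alpha> \<inter> cball ap r0 \<noteq> {}"
    have "Cm \<alpha> \<inter> frontier (cball ap r0) \<noteq> {}"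
    proof (rule connected_Int_frontier)
      show "connected (Cm \<alpha>)" using S(2) convex_connected by blast
      show "Cm \<alpha> \<inter> cball ap r0 \<noteq> {}" by fact
      show "Cm \<alpha> - cball ap r0 \<noteq> {}" using S(3) amn by blast
    qed
    then obtain v where "v \<in> Cm \<alpha> \<inter> sphere ap r0" unfolding cball_front by blast
    then have v: "v \<in> Cm \<alpha>" "v \<in> sphere ap r0" by auto
    have "W v \<le> \<alpha>" using v(1) S(1) by blast
    moreover have "m \<le> W v" using sph v(2) by blast
    ultimately show False using al by linarith
  qed
  have "setdist (Cm \<alpha>) (cball ap r0) \<noteq> 0"
    using setdist_eq_0_compact_closed[OF S(4), of "cball ap r0"] disj S(3) amn
    using r0nn by auto
  then show ?thesis using setdist_pos_le by (metis order_le_less)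
qed

end



lemma H1loc_cont:
  fixes V :: "real \<Rightarrow> 'a::euclidean_space"
  assumes H: "H1loc V V'"
  shows "continuous_on UNIV V"
proof -
  have co: "continuous_on {a..b} V" if ab: "a < b" for a b
  proof -
    have int: "V' integrable_on {a..b}" using H unfolding H1loc_def
      using absolutely_integrable_on_def by blast
    have eq: "V x = V a + integral {a..x} V'" if "x \<in> {a..b}" for x
    proof -
      have HI: "\<forall>a b. a \<le> b \<longrightarrow> (V' has_integral (V b - V a)) {a..b}"
        using H unfolding H1loc_def by blast
      have "a \<le> x" using that by simp
      then have "(V' has_integral (V x - V a)) {a..x}" using HI by blast
      then show ?thesis by (simp add: integral_unique)
    qed
    have "continuous_on {a..b} (\<lambda>x. integral {a..x} V')" by (rule indefinite_integral_continuous_1[OF int])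
    then have "continuous_on {a..b} (\<lambda>x. V a + integral {a..x} V')" by (rule continuous_on_add[OF continuous_on_const])
    then show ?thesis
    proof (rule continuous_on_eq)
      fix x assume "x \<in> {a..b}" then show "V a + integral {a..x} V' = V x" using eq by metis
    qed
  qed
  have "continuous (at x) V" for x
  proof -
    have "x \<in> interior {x-1..x+1}" by simp
    then show ?thesis using continuous_on_interior[OF co[of "x-1" "x+1"]] by simp
  qed
  then show ?thesis by (simp add: continuous_at_imp_continuous_on)
qed

lemma H1loc_meas:
  fixes V :: "real \<Rightarrow> 'a::euclidean_space"
  assumes H: "H1loc V V'"
  shows "V' \<in> borel_measurable lebesgue"
proof (rule borel_measurable_LIMSEQ_metric)
  fix n :: nat
  have "V' integrable_on {-real n..real n}" using H unfolding H1loc_def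
      using absolutely_integrable_on_def by blast
  then have "V' \<in> borel_measurable (lebesgue_on {-real n..real n})"
    by (rule integrable_imp_measurable)
  then show "(\<lambda>x. indicator {-real n..real n} x *\<^sub>R V' x) \<in> borel_measurable lebesgue"
    by (subst (asm) borel_measurable_restrict_space_iff) auto
next
  fix x :: real
  have "eventually (\<lambda>n. indicator {-real n..real n} x *\<^sub>R V' x = V' x) sequentially"
  proof -
    obtain N :: nat where "\<bar>x\<bar> \<le> real N" using real_arch_simple by blast
    then have "\<forall>n\<ge>N. indicator {-real n..real n} x *\<^sub>R V' x = V' x"
      by (auto simp: indicator_def)
    then show ?thesis unfolding eventually_sequentially by blast
  qed
  then show "(\<lambda>n. indicator {-real n..real n} x *\<^sub>R V' x) \<longlonglongrightarrow> V' x"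
    by (rule tendsto_eventually)
qed

lemma exp_left_nn:
  fixes c :: real assumes c: "c > 0"
  shows "(\<integral>\<^sup>+x. ennreal (exp (c * x)) * indicator {..x0} x \<partial>lborel) = ennreal (exp (c * x0) / c)"
proof -
  have "(\<integral>\<^sup>+x. ennreal (exp (c * x)) * indicator {..x0} x \<partial>lborel)
      = ennreal \<bar>-1\<bar> * (\<integral>\<^sup>+x. ennreal (exp (c * (0 + (-1) * x))) * indicator {..x0} (0 + (-1) * x) \<partial>lborel)"
    by (rule nn_integral_real_affine) auto
  also have "\<dots> = (\<integral>\<^sup>+x. ennreal (exp (- c * x)) * indicator {-x0..} x \<partial>lborel)"
  proof -
    have pw: "\<And>x. ennreal (exp (c * (0 + -1 * x))) * indicator {..x0} (0 + -1 * x)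
       = ennreal (exp (- c * x)) * indicator {-x0..} x" by (auto simp: indicator_def)
    show ?thesis by (simp only: pw) simp
  qed
  also have "\<dots> = ennreal (exp (- c * (-x0)) / c)"
    by (rule nn_integral_has_integral_lebesgue') (use has_integral_exp_minus_to_infinity[OF c, of "-x0"] in auto)
  finally show ?thesis by simp
qed



lemma amgm_aux:
  fixes n e t :: real assumes t: "t > 0" and e: "e > 0"
  shows "n \<le> t * ((1/2) * n^2 * e) + (1/(2*t)) * (1/e)"
proof -
  have "0 \<le> (t*e*n - 1)^2" by simp
  then have h: "2*t*e*n \<le> t^2*n^2*e^2 + 1" by (simp add: power2_eq_square algebra_simps)
  have "t * ((1/2) * n^2 * e) + (1/(2*t)) * (1/e) = (t^2*n^2*e^2 + 1) / (2*t*e)"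
    using t e by (simp add: field_simps power2_eq_square)
  moreover have "n = (2*t*e*n) / (2*t*e)" using t e by simp
  ultimately show ?thesis using h t e by (metis divide_right_mono less_eq_real_def mult_pos_pos zero_less_numeral mult_2)
qed

lemma ereal_fin_aux:
  fixes X Y :: ennreal
  assumes "X \<le> ennreal r" "X \<le> Y"
  shows "0 \<le> enn2ereal Y - enn2ereal X"
proof -
  have le: "enn2ereal X \<le> enn2ereal Y" using assms(2) by (simp add: less_eq_ennreal.rep_eq)
  have "X \<noteq> top" using assms(1) by (metis ennreal_neq_top neq_top_trans)
  then have "enn2ereal X \<noteq> \<infinity>" by simp
  moreover have "enn2ereal X \<noteq> -\<infinity>" using enn2ereal_nonneg[of X] by auto
  ultimately obtain a where a: "enn2ereal X = ereal a" by (cases "enn2ereal X") auto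
  show ?thesis using le unfolding a by (cases "enn2ereal Y") auto
qed

lemma lower_bound:
  fixes W :: "'a::euclidean_space \<Rightarrow> real" and V V' :: "real \<Rightarrow> 'a"
  assumes H: "H1loc V V'" and X: "V \<in> XL am ap r0 L" and c: "c > 0"
    and Wmin: "\<forall>u. W am \<le> W u"
    and r0p: "\<forall>u\<in>cball ap r0. W u \<ge> 0"
    and K: "closed K" "\<forall>u. W u < 0 \<longrightarrow> u \<in> K"
    and d: "d > 0" "\<forall>u\<in>K. \<forall>v\<in>cball ap r0. d \<le> dist u v"
    and cd: "sqrt (2 * negpart (W am)) \<le> c * d"
  shows "energy W c V V' \<ge> 0"
proof -
  define f where "f x = ((1/2) * (norm (V' x))\<^sup>2 + W (V x)) * exp (c * x)" for x
  have en: "energy W c V V' = enn2ereal (\<integral>\<^sup>+x. ennreal (max 0 (f x)) \<partial>lborel)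
       - enn2ereal (\<integral>\<^sup>+x. ennreal (max 0 (- f x)) \<partial>lborel)"
    unfolding energy_def f_def Let_def by simp
  define S where "S = {x. W (V x) < 0}"
  have VL: "\<forall>x\<ge>L. norm (V x - ap) \<le> r0" using X unfolding XL_def by simp
  have SL: "x < L" if "x \<in> S" for x
  proof (rule ccontr)
    assume "\<not> x < L" then have "V x \<in> cball ap r0" using VL by (simp add: dist_norm norm_minus_commute)
    then have "W (V x) \<ge> 0" using r0p by blast
    with that show False unfolding S_def by simp
  qed
  show ?thesis
  proof (cases "S = {}")
    case True
    have "f x \<ge> 0" for x
    proof -
      have "x \<notin> S" using True by simp
      then have "W (V x) \<ge> 0" unfolding S_def by simp
      then show ?thesis unfolding f_def by (intro mult_nonneg_nonneg) auto
    qed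
    then have "(\<integral>\<^sup>+x. ennreal (max 0 (- f x)) \<partial>lborel) = 0" by simp
    then show ?thesis unfolding en by (simp add: zero_ennreal.rep_eq enn2ereal_nonneg)
  next
    case False
    define x0 where "x0 = Sup S"
    have bdd: "bdd_above S" using SL by (meson bdd_aboveI less_imp_le)
    have x0L: "x0 \<le> L" unfolding x0_def using False SL by (meson cSup_least less_imp_le)
    have Vc: "continuous_on UNIV V" by (rule H1loc_cont[OF H])
    have clT: "closed (V -` K)"
      by (rule continuous_closed_vimage[OF K(1)]) (use Vc continuous_on_eq_continuous_at in blast)
    have "S \<subseteq> V -` K" using K(2) unfolding S_def by auto
    moreover have "x0 \<in> closure S" unfolding x0_def using closure_contains_Sup False bdd by blast
    ultimately have Vx0: "V x0 \<in> K" using clT closure_minimal by blast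
    have VLc: "V L \<in> cball ap r0" using VL by (simp add: dist_norm norm_minus_commute)
    have "d \<le> dist (V x0) (V L)" using d(2) Vx0 VLc by blast
    then have dle: "d \<le> norm (V L - V x0)" by (simp add: dist_norm norm_minus_commute)
    have after: "W (V x) \<ge> 0" if "x > x0" for x
    proof (rule ccontr)
      assume "\<not> W (V x) \<ge> 0" then have "x \<in> S" unfolding S_def by simp
      then have "x \<le> x0" unfolding x0_def using bdd by (rule cSup_upper)
      with that show False by simp
    qed
    define A where "A = negpart (W am)"
    have A0: "A \<ge> 0" unfolding A_def negpart_def by simp
    have AW: "- W (V x) \<le> A" for x using Wmin unfolding A_def negpart_def by (smt (verit))
    have Vm[measurable]: "V' \<in> borel_measurable lebesgue" by (rule H1loc_meas[OF H])
    have negpw: "ennreal (max 0 (- f x)) \<le> ennreal (A * exp (c*x)) * indicator {..x0} x" for x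
    proof (cases "x \<le> x0")
      case True
      have "- f x \<le> - W (V x) * exp (c * x)" unfolding f_def
        by (simp add: algebra_simps)
      also have "\<dots> \<le> A * exp (c * x)" using mult_right_mono[OF AW[of x], of "exp (c*x)"] by simp
      finally have "max 0 (- f x) \<le> A * exp (c * x)" using A0 by simp
      then show ?thesis using True by (simp add: ennreal_leI)
    next
      case False
      then have "W (V x) \<ge> 0" using after by simp
      then have "f x \<ge> 0" unfolding f_def by (intro mult_nonneg_nonneg) auto
      then show ?thesis by simp
    qed
    have negI: "(\<integral>\<^sup>+x. ennreal (max 0 (- f x)) \<partial>lborel) \<le> ennreal (A * (exp (c*x0) / c))"
    proof -
      have "(\<integral>\<^sup>+x. ennreal (max 0 (- f x)) \<partial>lborel)
          \<le> (\<integral>\<^sup>+x. ennreal (A * exp (c*x)) * indicator {..x0} x \<partial>lborel)"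
        by (rule nn_integral_mono) (rule negpw)
      also have "\<dots> = (\<integral>\<^sup>+x. ennreal A * (ennreal (exp (c*x)) * indicator {..x0} x) \<partial>lborel)"
        using A0 by (simp add: ennreal_mult mult.assoc)
      also have "\<dots> = ennreal A * (\<integral>\<^sup>+x. ennreal (exp (c*x)) * indicator {..x0} x \<partial>lborel)"
        by (rule nn_integral_cmult) measurable
      also have "\<dots> = ennreal A * ennreal (exp (c*x0) / c)" using exp_left_nn[OF c] by simp
      also have "\<dots> = ennreal (A * (exp (c*x0) / c))" by (rule ennreal_mult[symmetric]) (use A0 c in auto)
      finally show ?thesis .
    qed
    define p where "p x = (1/2) * (norm (V' x))\<^sup>2 * exp (c*x)" for x
    have intn2: "(\<lambda>x. (norm (V' x))\<^sup>2) integrable_on {x0..L}" using H unfolding H1loc_def by blast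
    have absV: "V' absolutely_integrable_on {x0..L}" using H unfolding H1loc_def by blast
    have pint: "p integrable_on {x0..L}"
    proof -
      have "(\<lambda>x. exp (c*x) * ((1/2) * (norm (V' x))\<^sup>2)) absolutely_integrable_on {x0..L}"
      proof (rule absolutely_integrable_bounded_measurable_product_real)
        have "continuous_on {x0..L} (\<lambda>x. exp (c*x))" by (intro continuous_intros)
        then show "(\<lambda>x. exp (c*x)) \<in> borel_measurable (lebesgue_on {x0..L})"
          by (rule continuous_imp_measurable_on_sets_lebesgue) simp
        show "{x0..L} \<in> sets lebesgue" by simp
        have "continuous_on {x0..L} (\<lambda>x. exp (c*x))" by (intro continuous_intros)
        then show "bounded ((\<lambda>x. exp (c*x)) ` {x0..L})"
          by (rule compact_imp_bounded[OF compact_continuous_image]) simp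
        have "(\<lambda>x. (1/2) * (norm (V' x))\<^sup>2) integrable_on {x0..L}"
          by (rule integrable_on_mult_right[OF intn2])
        then show "(\<lambda>x. (1/2) * (norm (V' x))\<^sup>2) absolutely_integrable_on {x0..L}"
          by (rule nonnegative_absolutely_integrable_1) simp
      qed
      then show ?thesis unfolding p_def absolutely_integrable_on_def by (simp add: mult_ac)
    qed
    define P where "P = integral {x0..L} p"
    have pnn: "p x \<ge> 0" for x unfolding p_def by simp
    have posI: "ennreal P \<le> (\<integral>\<^sup>+x. ennreal (max 0 (f x)) \<partial>lborel)"
    proof -
      have "(\<integral>\<^sup>+x. ennreal (p x) * indicator {x0..L} x \<partial>lborel) = ennreal P"
        by (rule nn_integral_has_integral_lebesgue') (use pnn pint in \<open>auto simp: P_def\<close>)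
      moreover have "(\<integral>\<^sup>+x. ennreal (p x) * indicator {x0..L} x \<partial>lborel) \<le> (\<integral>\<^sup>+x. ennreal (max 0 (f x)) \<partial>lborel)"
      proof (rule nn_integral_mono_AE)
        show "AE x in lborel. ennreal (p x) * indicator {x0..L} x \<le> ennreal (max 0 (f x))"
          using AE_lborel_singleton[of x0]
        proof eventually_elim
          fix x :: real assume x: "x \<noteq> x0"
          show "ennreal (p x) * indicator {x0..L} x \<le> ennreal (max 0 (f x))"
          proof (cases "x \<in> {x0..L}")
            case True
            then have "x > x0" using x by auto
            then have "W (V x) \<ge> 0" by (rule after)
            then have "p x \<le> f x" unfolding p_def f_def by (simp add: algebra_simps)
            then show ?thesis using True by (simp add: ennreal_leI)
          qed simp
        qed
      qed
      ultimately show ?thesis by simp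
    qed
    define E where "E = exp (- c * x0) / c"
    have Epos: "E > 0" unfolding E_def using c by simp
    have key: "d \<le> t * P + E / (2*t)" if t: "t > 0" for t
    proof -
      have amgm: "norm (V' x) \<le> t * p x + (1/(2*t)) * exp (- c * x)" for x
        using amgm_aux[OF t, of "exp (c*x)" "norm (V' x)"] unfolding p_def by (simp add: exp_minus inverse_eq_divide)
      have nint: "(\<lambda>x. norm (V' x)) integrable_on {x0..L}" and V'int: "V' integrable_on {x0..L}"
        using absV unfolding absolutely_integrable_on_def by auto
      have eint: "((\<lambda>x. exp (- c * x)) has_integral (exp (-c*L)/(-c) - exp (-c*x0)/(-c))) {x0..L}"
      proof (rule fundamental_theorem_of_calculus[OF x0L])
        fix x assume "x \<in> {x0..L}"
        show "((\<lambda>x. exp (-c*x)/(-c)) has_vector_derivative exp (- c * x)) (at x within {x0..L})"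
          using c by (auto intro!: derivative_eq_intros simp: has_real_derivative_iff_has_vector_derivative[symmetric])
      qed
      have Vint: "(V' has_integral (V L - V x0)) {x0..L}" using H x0L unfolding H1loc_def by blast
      have gint: "(\<lambda>x. t * p x + (1/(2*t)) * exp (- c * x)) integrable_on {x0..L}"
        by (intro integrable_add integrable_on_mult_right pint) (use eint in blast)
      have "norm (V L - V x0) = norm (integral {x0..L} V')" using Vint by (simp add: integral_unique)
      also have "\<dots> \<le> integral {x0..L} (\<lambda>x. t * p x + (1/(2*t)) * exp (- c * x))"
        by (rule integral_norm_bound_integral[OF V'int gint]) (rule amgm)
      also have "\<dots> = t * P + (1/(2*t)) * (exp (-c*L)/(-c) - exp (-c*x0)/(-c))"
      proof -
        have "((\<lambda>x. t * p x + (1/(2*t)) * exp (- c * x)) has_integral (t * P + (1/(2*t)) * (exp (-c*L)/(-c) - exp (-c*x0)/(-c)))) {x0..L}"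
          by (intro has_integral_add has_integral_mult_right eint) (unfold P_def, rule integrable_integral[OF pint])
        then show ?thesis by (rule integral_unique)
      qed
      also have "\<dots> \<le> t * P + E / (2*t)"
      proof -
        have "exp (-c*L)/(-c) - exp (-c*x0)/(-c) \<le> E" unfolding E_def using c
          by (simp add: field_simps)
        then have "(1/(2*t)) * (exp (-c*L)/(-c) - exp (-c*x0)/(-c)) \<le> (1/(2*t)) * E"
          using t by (intro mult_left_mono) auto
        then show ?thesis by simp
      qed
      finally show ?thesis using dle by linarith
    qed
    have Pb: "d^2 / (2*E) \<le> P"
    proof -
      have "d \<le> (E/d) * P + E / (2*(E/d))" using key[of "E/d"] Epos d(1) by simp
      also have "E / (2*(E/d)) = d/2" using Epos d(1) by (simp add: field_simps)
      finally have h0: "d \<le> (E/d) * P + d/2" .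
      have h1: "d/2 \<le> (E/d)*P" using h0 by linarith
      have "d/2*d \<le> (E/d)*P*d" using mult_right_mono[OF h1, of d] d(1) by simp
      moreover have "(E/d)*P*d = E*P" using d(1) by simp
      ultimately have h2: "d/2*d \<le> E*P" by simp
      have h3: "d^2 \<le> P*(2*E)" using h2 by (simp add: power2_eq_square algebra_simps)
      have "2*E > 0" using Epos by simp
      then show ?thesis using h3 pos_divide_le_eq by blast
    qed
    have bnd: "A * (exp (c*x0) / c) \<le> d^2 / (2*E)"
    proof -
      have "2*A \<le> (c*d)^2"
      proof -
        have "sqrt (2*A) ^ 2 \<le> (c*d)^2" using cd A0 unfolding A_def
          by (intro power_mono) auto
        then show ?thesis using A0 by simp
      qed
      then have "A / c \<le> d^2 * c / 2" using c by (simp add: field_simps power2_eq_square)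
      then have h: "A / c * exp (c*x0) \<le> d^2 * c / 2 * exp (c*x0)" by (rule mult_right_mono) simp
      have eq: "d^2 / (2*E) = d^2 * c / 2 * exp (c*x0)" unfolding E_def using c
        by (simp add: field_simps exp_minus)
      have eq2: "A * (exp (c*x0) / c) = A / c * exp (c*x0)" by simp
      show ?thesis using h eq eq2 by linarith
    qed
    have "(\<integral>\<^sup>+x. ennreal (max 0 (- f x)) \<partial>lborel) \<le> (\<integral>\<^sup>+x. ennreal (max 0 (f x)) \<partial>lborel)"
    proof -
      have "ennreal (A * (exp (c*x0) / c)) \<le> ennreal P" using bnd Pb by (intro ennreal_leI) simp
      then show ?thesis using order_trans[OF negI order_trans[OF _ posI]] by blast
    qed
    then show ?thesis unfolding en by (rule ereal_fin_aux[OF negI])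
  qed
qed



lemma ind_has_int:
  fixes k :: "'b::banach"
  shows "((\<lambda>x::real. if x \<in> {0..1} then k else 0) has_integral (Henstock_Kurzweil_Integration.content {max 0 a..min 1 b} *\<^sub>R k)) {a..b}"
proof -
  have "((\<lambda>x. k) has_integral (Henstock_Kurzweil_Integration.content {max 0 a..min 1 b} *\<^sub>R k)) ({0..1} \<inter> {a..b})"
    using has_integral_const_real[of k "max 0 a" "min 1 b"] by simp
  then show ?thesis by (subst has_integral_restrict_Int)
qed

lemma ereal_neg_aux:
  fixes X Y :: ennreal
  assumes "X \<le> ennreal a" "ennreal b \<le> Y" "0 \<le> a" "a < b"
  shows "enn2ereal X - enn2ereal Y < 0"
proof -
  have "X \<noteq> top" using assms(1) by (metis ennreal_neq_top neq_top_trans)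
  then obtain x where x: "X = ennreal x" "0 \<le> x" by (cases X) auto
  have xa: "x \<le> a" using assms(1) x assms(3) by (simp add: ennreal_le_iff)
  show ?thesis
  proof (cases "Y = top")
    case True then show ?thesis using x by (simp add: enn2ereal_ennreal)
  next
    case False
    then obtain y where y: "Y = ennreal y" "0 \<le> y" by (cases Y) auto
    have "b \<le> y" using assms(2) y assms(3,4) by (simp add: ennreal_le_iff)
    then show ?thesis using x y xa assms(4) by (simp add: enn2ereal_ennreal)
  qed
qed

lemma exists_neg:
  fixes W :: "'a::euclidean_space \<Rightarrow> real"
  assumes Wc: "continuous_on UNIV W" and Wam: "W am < 0" and Wap: "W ap = 0" and r0: "r0 \<ge> 0"
  shows "\<exists>c>0. inf_energy W am ap r0 c 1 < 0"
proof -
  define cl where "cl x = max 0 (min 1 x)" for x :: real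
  define V where "V x = am + cl x *\<^sub>R (ap - am)" for x
  define V' where "V' x = (if x \<in> {0..1} then ap - am else 0)" for x :: real
  have H: "H1loc V V'"
    unfolding H1loc_def
  proof (intro allI conjI impI)
    fix a b :: real
    have n1: "(\<lambda>x. norm (V' x)) = (\<lambda>x. if x \<in> {0..1} then norm (ap - am) else 0)"
      unfolding V'_def by auto
    have n2: "(\<lambda>x. (norm (V' x))\<^sup>2) = (\<lambda>x. if x \<in> {0..1} then (norm (ap - am))\<^sup>2 else 0)"
      unfolding V'_def by auto
    have "V' integrable_on {a..b}" unfolding V'_def using ind_has_int by blast
    moreover have "(\<lambda>x. norm (V' x)) integrable_on {a..b}" unfolding n1 using ind_has_int by blast
    ultimately show "V' absolutely_integrable_on {a..b}" by (simp add: absolutely_integrable_on_def)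
    show "(\<lambda>x. (norm (V' x))\<^sup>2) integrable_on {a..b}" unfolding n2 using ind_has_int by blast
    assume ab: "a \<le> b"
    have ct: "Henstock_Kurzweil_Integration.content {max 0 a..min 1 b} = cl b - cl a" using ab unfolding cl_def
      by (auto simp: max_def min_def)
    have e1: "V b - V a = (cl b - cl a) *\<^sub>R (ap - am)" unfolding V_def by (simp add: scaleR_diff_left)
    then have "V b - V a = Henstock_Kurzweil_Integration.content {max 0 a..min 1 b} *\<^sub>R (ap - am)"
      using ct by simp
    then show "(V' has_integral (V b - V a)) {a..b}" unfolding V'_def using ind_has_int by metis
  qed
  have X: "V \<in> XL am ap r0 1" unfolding XL_def V_def cl_def using r0 by auto
  have Vc: "continuous_on {0..1} (\<lambda>x. W (V x))"
  proof -
    have Vc0: "continuous_on UNIV V" unfolding V_def cl_def by (intro continuous_intros)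
    show ?thesis by (rule continuous_on_compose2[OF Wc continuous_on_subset[OF Vc0]]) auto
  qed
  have cpt: "compact ((\<lambda>x. W (V x)) ` {0..1})" by (rule compact_continuous_image[OF Vc]) simp
  have ne: "(\<lambda>x. W (V x)) ` {0..1} \<noteq> {}" by simp
  obtain B where "B \<in> (\<lambda>x. W (V x)) ` {0..1}" and Bs: "\<forall>t\<in>(\<lambda>x. W (V x)) ` {0..1}. t \<le> B"
    using compact_attains_sup[OF cpt ne] by blast
  have B: "\<forall>x\<in>{0..1}. W (V x) \<le> B" using Bs by blast
  define K where "K = max 0 ((1/2) * (norm (ap - am))\<^sup>2 + B)"
  define A where "A = - W am"
  have A: "A > 0" unfolding A_def using Wam by simp
  define c where "c = A / (K * exp 2 + A)"
  have K0: "K \<ge> 0" unfolding K_def by simp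
  have cpos: "c > 0" unfolding c_def using A K0 by (simp add: add_nonneg_pos)
  have Ke: "K * exp 2 \<ge> 0" using K0 by simp
  have kp: "K * exp 2 + A > 0" using Ke A by linarith
  have c1: "c \<le> 1" unfolding c_def using pos_divide_le_eq[OF kp] Ke by simp
  define f where "f x = ((1/2) * (norm (V' x))\<^sup>2 + W (V x)) * exp (c * x)" for x
  have en: "energy W c V V' = enn2ereal (\<integral>\<^sup>+x. ennreal (max 0 (f x)) \<partial>lborel)
       - enn2ereal (\<integral>\<^sup>+x. ennreal (max 0 (- f x)) \<partial>lborel)"
    unfolding energy_def f_def Let_def by simp
  have pospw: "ennreal (max 0 (f x)) \<le> ennreal (K * exp 1) * indicator {0..1} x" for x
  proof (cases "x \<in> {0..1}")
    case True
    have wb: "W (V x) \<le> B" using B True by blast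
    have "f x \<le> K * exp (c * x)" unfolding f_def K_def
      using wb True by (intro mult_right_mono) (auto simp: V'_def le_max_iff_disj)
    also have "\<dots> \<le> K * exp 1" using K0 True c1 cpos
      by (intro mult_left_mono) (auto simp: mult_le_one)
    finally show ?thesis using True K0 by (simp add: ennreal_leI)
  next
    case False
    show ?thesis
    proof (cases "x < 0")
      case True
      then have "V x = am" "V' x = 0" unfolding V_def V'_def cl_def by auto
      then have "f x \<le> 0" unfolding f_def using Wam by (simp add: mult_nonpos_nonneg)
      then show ?thesis by simp
    next
      case F2: False
      then have "x > 1" using False by auto
      then have "V x = ap" "V' x = 0" unfolding V_def V'_def cl_def by auto
      then have "f x = 0" unfolding f_def using Wap by simp
      then show ?thesis by simp
    qed
  qed
  have posI: "(\<integral>\<^sup>+x. ennreal (max 0 (f x)) \<partial>lborel) \<le> ennreal (K * exp 1)"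
  proof -
    have "(\<integral>\<^sup>+x. ennreal (max 0 (f x)) \<partial>lborel) \<le> (\<integral>\<^sup>+x. ennreal (K * exp 1) * indicator {0..1::real} x \<partial>lborel)"
      using pospw by (intro nn_integral_mono) blast
    also have "\<dots> = ennreal (K * exp 1)" by (simp add: nn_integral_cmult_indicator)
    finally show ?thesis .
  qed
  have negpw: "ennreal (A * exp (-1)) * indicator {-1/c..<0} x \<le> ennreal (max 0 (- f x))" for x
  proof (cases "x \<in> {-1/c..<0}")
    case True
    then have "V x = am" "V' x = 0" unfolding V_def V'_def cl_def by auto
    then have fx: "- f x = A * exp (c * x)" unfolding f_def A_def by simp
    have "-1 \<le> c * x" using True cpos by (simp add: field_simps)
    then have "A * exp (-1) \<le> A * exp (c * x)" using A by simp
    then show ?thesis using True fx A by (simp add: ennreal_leI)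
  qed simp
  have negI: "ennreal (A * exp (-1) * (1/c)) \<le> (\<integral>\<^sup>+x. ennreal (max 0 (- f x)) \<partial>lborel)"
  proof -
    have "(\<integral>\<^sup>+x. ennreal (A * exp (-1)) * indicator {-1/c..<0::real} x \<partial>lborel) = ennreal (A * exp (-1)) * ennreal (1/c)"
      using cpos by (simp add: nn_integral_cmult_indicator)
    also have "\<dots> = ennreal (A * exp (-1) * (1/c))" by (rule ennreal_mult[symmetric]) (use A cpos in auto)
    finally have "ennreal (A * exp (-1) * (1/c)) = (\<integral>\<^sup>+x. ennreal (A * exp (-1)) * indicator {-1/c..<0::real} x \<partial>lborel)" ..
    also have "\<dots> \<le> (\<integral>\<^sup>+x. ennreal (max 0 (- f x)) \<partial>lborel)"
      by (rule nn_integral_mono) (rule negpw)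
    finally show ?thesis .
  qed
  have lt: "K * exp 1 < A * exp (-1) * (1/c)"
  proof -
    have "A * (1/c) = K * exp 2 + A" unfolding c_def using A K0 by (simp add: field_simps)
    then have "A * exp (-1) * (1/c) = (K * exp 2 + A) * exp (-1)" by (metis mult.commute mult.left_commute)
    also have "\<dots> = K * exp 1 + A * exp (-1)" by (simp add: algebra_simps exp_add[symmetric])
    finally show ?thesis using A by simp
  qed
  have "energy W c V V' < 0"
    unfolding en by (rule ereal_neg_aux[OF posI negI]) (use K0 lt in auto)
  moreover have "inf_energy W am ap r0 c 1 \<le> energy W c V V'"
    unfolding inf_energy_def using H X by (intro Inf_lower) blast
  ultimately show ?thesis using cpos by (meson le_less_trans)
qed



lemma img_div:
  fixes \<mu> :: real assumes m: "\<mu> > 0"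
  shows "(\<lambda>x. x / \<mu>) ` {\<mu>*a..\<mu>*b} = {a..b}"
proof
  show "(\<lambda>x. x / \<mu>) ` {\<mu>*a..\<mu>*b} \<subseteq> {a..b}" using m by (auto simp: field_simps)
  show "{a..b} \<subseteq> (\<lambda>x. x / \<mu>) ` {\<mu>*a..\<mu>*b}"
  proof
    fix x assume x: "x \<in> {a..b}"
    have "\<mu>*x \<in> {\<mu>*a..\<mu>*b}" using x m by (auto intro: mult_left_mono)
    moreover have "x = (\<mu>*x)/\<mu>" using m by simp
    ultimately show "x \<in> (\<lambda>x. x / \<mu>) ` {\<mu>*a..\<mu>*b}" by blast
  qed
qed

lemma stretch_int:
  fixes g :: "real \<Rightarrow> 'b::real_normed_vector"
  assumes m: "\<mu> > 0" and g: "(g has_integral I) {\<mu>*a..\<mu>*b}"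
  shows "((\<lambda>x. g (\<mu>*x)) has_integral (1/\<mu>) *\<^sub>R I) {a..b}"
proof -
  have "((\<lambda>x. g (\<mu>*x)) has_integral (1/\<bar>\<mu>\<bar>) *\<^sub>R I) ((\<lambda>x. x / \<mu>) ` {\<mu>*a..\<mu>*b})"
    using has_integral_stretch_real[OF g, of \<mu>] m by simp
  then show ?thesis using m img_div[OF m] by simp
qed

lemma stretch_intg:
  fixes g :: "real \<Rightarrow> 'b::real_normed_vector"
  assumes m: "\<mu> > 0" and g: "g integrable_on {\<mu>*a..\<mu>*b}"
  shows "(\<lambda>x. g (\<mu>*x)) integrable_on {a..b}"
  using stretch_int[OF m integrable_integral[OF g]] by blast

lemma H1loc_scale:
  fixes V V' :: "real \<Rightarrow> 'a::euclidean_space"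
  assumes m: "\<mu> > 0" and H: "H1loc V V'"
  shows "H1loc (\<lambda>x. V (\<mu>*x)) (\<lambda>x. \<mu> *\<^sub>R V' (\<mu>*x))"
  unfolding H1loc_def
proof (intro allI conjI impI)
  fix a b :: real
  have A: "V' absolutely_integrable_on {\<mu>*a..\<mu>*b}" "(\<lambda>x. (norm (V' x))\<^sup>2) integrable_on {\<mu>*a..\<mu>*b}"
    using H unfolding H1loc_def by blast+
  have i1: "V' integrable_on {\<mu>*a..\<mu>*b}" "(\<lambda>x. norm (V' x)) integrable_on {\<mu>*a..\<mu>*b}"
    using A(1) unfolding absolutely_integrable_on_def by auto
  have "(\<lambda>x. \<mu> *\<^sub>R V' (\<mu>*x)) integrable_on {a..b}"
    by (rule integrable_cmul[OF stretch_intg[OF m i1(1)]])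
  moreover have "(\<lambda>x. norm (\<mu> *\<^sub>R V' (\<mu>*x))) integrable_on {a..b}"
  proof -
    have "(\<lambda>x. \<mu> *\<^sub>R norm (V' (\<mu>*x))) integrable_on {a..b}"
      by (rule integrable_cmul[OF stretch_intg[OF m i1(2)]])
    then show ?thesis using m by simp
  qed
  ultimately show "(\<lambda>x. \<mu> *\<^sub>R V' (\<mu>*x)) absolutely_integrable_on {a..b}"
    unfolding absolutely_integrable_on_def by blast
  have "(\<lambda>x. \<mu>^2 *\<^sub>R (norm (V' (\<mu>*x)))\<^sup>2) integrable_on {a..b}"
    by (rule integrable_cmul[OF stretch_intg[OF m A(2)]])
  then show "(\<lambda>x. (norm (\<mu> *\<^sub>R V' (\<mu>*x)))\<^sup>2) integrable_on {a..b}"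
    using m by (simp add: power_mult_distrib)
  assume ab: "a \<le> b"
  have "\<mu>*a \<le> \<mu>*b" using ab m by simp
  then have "(V' has_integral (V (\<mu>*b) - V (\<mu>*a))) {\<mu>*a..\<mu>*b}" using H unfolding H1loc_def by blast
  from has_integral_cmul[OF stretch_int[OF m this], of \<mu>]
  show "((\<lambda>x. \<mu> *\<^sub>R V' (\<mu>*x)) has_integral (V (\<mu>*b) - V (\<mu>*a))) {a..b}"
    using m by simp
qed

lemma ennreal_div_aux:
  assumes "ennreal \<mu> * Z = ennreal r" "\<mu> > 0" "r \<ge> 0"
  shows "Z = ennreal (r / \<mu>)"
proof -
  have "Z \<noteq> top"
  proof
    assume "Z = top" then have "ennreal \<mu> * Z = top" using assms(2) by (simp add: ennreal_mult_top)
    then show False using assms(1) by simp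
  qed
  then obtain z where z: "Z = ennreal z" "z \<ge> 0" by (cases Z) auto
  have "ennreal (\<mu> * z) = ennreal r" using assms(1,2) z by (simp add: ennreal_mult)
  then have "\<mu> * z = r" using assms(2,3) z by (simp add: mult_nonneg_nonneg)
  then have "z = r / \<mu>" using assms(2) by (simp add: field_simps)
  then show ?thesis using z by simp
qed

lemma fin_real:
  fixes X :: ennreal assumes "X \<le> Y" "Y < top"
  shows "X = ennreal (enn2real X)" "enn2real X \<ge> 0"
  using assms by (auto simp: ennreal_enn2real_if top_unique)

lemma exp_left_cmult:
  fixes c A :: real assumes c: "c > 0" and A0: "A \<ge> 0"
  shows "(\<integral>\<^sup>+y. ennreal (A * exp (c*y)) * indicator {..L} y \<partial>lborel) = ennreal (A * (exp (c*L) / c))"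
proof -
  have "(\<integral>\<^sup>+y. ennreal (A * exp (c*y)) * indicator {..L} y \<partial>lborel) = (\<integral>\<^sup>+y. ennreal A * (ennreal (exp (c*y)) * indicator {..L} y) \<partial>lborel)"
    using A0 by (simp add: ennreal_mult mult.assoc)
  also have "\<dots> = ennreal A * (\<integral>\<^sup>+x. ennreal (exp (c*x)) * indicator {..L} x \<partial>lborel)"
    by (rule nn_integral_cmult) measurable
  also have "\<dots> = ennreal A * ennreal (exp (c*L) / c)" using exp_left_nn[OF c] by simp
  also have "\<dots> = ennreal (A * (exp (c*L) / c))" by (rule ennreal_mult[symmetric]) (use A0 c in auto)
  finally show ?thesis .
qed

lemma open_step:
  fixes W :: "'a::euclidean_space \<Rightarrow> real" and V V' :: "real \<Rightarrow> 'a"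
  assumes H: "H1loc V V'" and X: "V \<in> XL am ap r0 L" and c: "c > 0"
    and neg: "energy W c V V' < 0"
    and Wmin: "\<forall>u. W am \<le> W u" and r0p: "\<forall>u\<in>cball ap r0. W u \<ge> 0" and Wc: "continuous_on UNIV W"
  shows "\<exists>\<delta>>0. \<forall>\<mu>. 0 < \<mu> \<and> \<mu> < 1 + \<delta> \<longrightarrow> energy W (\<mu>*c) (\<lambda>x. V (\<mu>*x)) (\<lambda>x. \<mu> *\<^sub>R V' (\<mu>*x)) < 0"
proof -
  have Vm[measurable]: "V' \<in> borel_measurable lebesgue" by (rule H1loc_meas[OF H])
  have idm[measurable]: "(\<lambda>x::real. x) \<in> borel_measurable lebesgue" by (rule measurable_completion) simp
  have Vc: "continuous_on UNIV V" by (rule H1loc_cont[OF H])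
  have WVb: "(\<lambda>y. W (V y)) \<in> borel_measurable borel"
    by (rule borel_measurable_continuous_onI) (rule continuous_on_compose2[OF Wc Vc], simp)
  have WVm[measurable]: "(\<lambda>y. W (V y)) \<in> borel_measurable lebesgue"
    by (rule measurable_completion) (simp add: WVb)
  define p where "p y = (1/2) * (norm (V' y))\<^sup>2 * exp (c*y)" for y
  define w where "w y = W (V y) * exp (c*y)" for y
  define F where "F \<mu> y = \<mu>\<^sup>2 * p y + w y" for \<mu> y
  have pm[measurable]: "p \<in> borel_measurable lebesgue" unfolding p_def by measurable
  have wm[measurable]: "w \<in> borel_measurable lebesgue" unfolding w_def by measurable
  have Fm[measurable]: "F \<mu> \<in> borel_measurable lebesgue" for \<mu> unfolding F_def by measurable
  have pnn: "p y \<ge> 0" for y unfolding p_def by simp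
  define A where "A = negpart (W am)"
  have A0: "A \<ge> 0" unfolding A_def negpart_def by simp
  have AW: "- W (V x) \<le> A" for x using Wmin unfolding A_def negpart_def by (smt (verit))
  have VL: "\<forall>x\<ge>L. norm (V x - ap) \<le> r0" using X unfolding XL_def by simp
  have wg: "ennreal (max 0 (- w y)) \<le> ennreal (A * exp (c*y)) * indicator {..L} y" for y
  proof (cases "y \<le> L")
    case True
    have "- w y \<le> A * exp (c * y)" unfolding w_def
      using mult_right_mono[OF AW[of y], of "exp (c*y)"] by simp
    then have "max 0 (- w y) \<le> A * exp (c * y)" using A0 by simp
    then show ?thesis using True by (simp add: ennreal_leI)
  next
    case False
    then have "V y \<in> cball ap r0" using VL by (simp add: dist_norm norm_minus_commute)
    then have "W (V y) \<ge> 0" using r0p by blast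
    then have "w y \<ge> 0" unfolding w_def by simp
    then show ?thesis by simp
  qed
  define bn where "bn = (\<integral>\<^sup>+y. ennreal (max 0 (- w y)) \<partial>lebesgue)"
  define bp where "bp = (\<integral>\<^sup>+y. ennreal (max 0 (w y)) \<partial>lebesgue)"
  define a where "a = (\<integral>\<^sup>+y. ennreal (p y) \<partial>lebesgue)"
  define Pp where "Pp \<mu> = (\<integral>\<^sup>+y. ennreal (max 0 (F \<mu> y)) \<partial>lebesgue)" for \<mu>
  define Pn where "Pn \<mu> = (\<integral>\<^sup>+y. ennreal (max 0 (- F \<mu> y)) \<partial>lebesgue)" for \<mu>
  have bnG: "bn < top"
  proof -
    have "bn \<le> (\<integral>\<^sup>+y. ennreal (A * exp (c*y)) * indicator {..L} y \<partial>lborel)"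
      unfolding bn_def nn_integral_completion by (rule nn_integral_mono) (rule wg)
    also have "\<dots> = ennreal (A * (exp (c*L) / c))" by (rule exp_left_cmult[OF c A0])
    finally show ?thesis by (simp add: order_le_less_trans)
  qed
  have Pnbn: "Pn \<mu> \<le> bn" for \<mu>
    unfolding Pn_def bn_def
  proof (rule nn_integral_mono)
    fix y
    have "w y \<le> F \<mu> y" unfolding F_def using pnn[of y] by simp
    then show "ennreal (max 0 (- F \<mu> y)) \<le> ennreal (max 0 (- w y))" by (intro ennreal_leI) simp
  qed
  have ident: "Pp \<mu> + bn = Pn \<mu> + (ennreal (\<mu>\<^sup>2) * a + bp)" for \<mu>
  proof -
    have pw: "ennreal (max 0 (F \<mu> y)) + ennreal (max 0 (- w y))
        = ennreal (max 0 (- F \<mu> y)) + (ennreal (\<mu>\<^sup>2) * ennreal (p y) + ennreal (max 0 (w y)))" for y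
    proof -
      have "ennreal (\<mu>\<^sup>2) * ennreal (p y) = ennreal (\<mu>\<^sup>2 * p y)" using pnn[of y] by (simp add: ennreal_mult)
      moreover have "ennreal (max 0 (F \<mu> y)) + ennreal (max 0 (- w y)) = ennreal (max 0 (F \<mu> y) + max 0 (- w y))"
        by (simp add: ennreal_plus)
      moreover have "ennreal (max 0 (- F \<mu> y)) + (ennreal (\<mu>\<^sup>2 * p y) + ennreal (max 0 (w y)))
          = ennreal (max 0 (- F \<mu> y) + (\<mu>\<^sup>2 * p y + max 0 (w y)))"
        using pnn[of y] by (simp add: ennreal_plus)
      moreover have "max 0 (F \<mu> y) + max 0 (- w y) = max 0 (- F \<mu> y) + (\<mu>\<^sup>2 * p y + max 0 (w y))"
      proof -
        have q: "0 \<le> \<mu>\<^sup>2 * p y" using pnn[of y] by simp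
        show ?thesis unfolding F_def max_def using q by auto
      qed
      ultimately show ?thesis by simp
    qed
    have "Pp \<mu> + bn = (\<integral>\<^sup>+y. ennreal (max 0 (F \<mu> y)) + ennreal (max 0 (- w y)) \<partial>lebesgue)"
      unfolding Pp_def bn_def by (rule nn_integral_add[symmetric]) measurable
    also have "\<dots> = (\<integral>\<^sup>+y. ennreal (max 0 (- F \<mu> y)) + (ennreal (\<mu>\<^sup>2) * ennreal (p y) + ennreal (max 0 (w y))) \<partial>lebesgue)"
      by (simp only: pw)
    also have "\<dots> = Pn \<mu> + (\<integral>\<^sup>+y. ennreal (\<mu>\<^sup>2) * ennreal (p y) + ennreal (max 0 (w y)) \<partial>lebesgue)"
      unfolding Pn_def by (rule nn_integral_add) measurable
    also have "(\<integral>\<^sup>+y. ennreal (\<mu>\<^sup>2) * ennreal (p y) + ennreal (max 0 (w y)) \<partial>lebesgue)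
        = (\<integral>\<^sup>+y. ennreal (\<mu>\<^sup>2) * ennreal (p y) \<partial>lebesgue) + bp"
      unfolding bp_def by (rule nn_integral_add) measurable
    also have "(\<integral>\<^sup>+y. ennreal (\<mu>\<^sup>2) * ennreal (p y) \<partial>lebesgue) = ennreal (\<mu>\<^sup>2) * a"
      unfolding a_def by (rule nn_integral_cmult) measurable
    finally show ?thesis .
  qed
  have en1: "energy W c V V' = enn2ereal (Pp 1) - enn2ereal (Pn 1)"
  proof -
    have fe: "\<And>x. ((1/2) * (norm (V' x))\<^sup>2 + W (V x)) * exp (c * x) = F 1 x"
      unfolding F_def p_def w_def by (auto simp: algebra_simps)
    show ?thesis unfolding energy_def Let_def Pp_def Pn_def nn_integral_completion by (simp only: fe)
  qed
  have Pn1: "Pn 1 < top" using Pnbn[of 1] bnG by (meson order_le_less_trans)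
  have lt1: "Pp 1 < Pn 1"
  proof (rule ccontr)
    assume "\<not> Pp 1 < Pn 1"
    then have "Pn 1 \<le> Pp 1" by simp
    moreover obtain r where "Pn 1 \<le> ennreal r" using Pn1 by (metis less_top ennreal_enn2real order_refl)
    ultimately have "0 \<le> enn2ereal (Pp 1) - enn2ereal (Pn 1)" using ereal_fin_aux by blast
    then show False using neg en1 by simp
  qed
  have Pp1: "Pp 1 < top" using lt1 Pn1 by (meson order.strict_trans)
  have abp: "a + bp < top"
  proof -
    have "a + bp \<le> Pn 1 + (a + bp)" by simp
    also have "\<dots> = Pp 1 + bn" using ident[of 1] by simp
    also have "\<dots> < top" using Pp1 bnG by (simp add: ennreal_add_less_top)
    finally show ?thesis .
  qed
  have afin: "a < top" and bpfin: "bp < top" using abp by (auto simp: ennreal_add_less_top)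
  define ar where "ar = enn2real a"
  define bpr where "bpr = enn2real bp"
  define bnr where "bnr = enn2real bn"
  have aeq: "a = ennreal ar" "ar \<ge> 0" unfolding ar_def using afin by (auto simp: ennreal_enn2real_if)
  have bpeq: "bp = ennreal bpr" "bpr \<ge> 0" unfolding bpr_def using bpfin by (auto simp: ennreal_enn2real_if)
  have bneq: "bn = ennreal bnr" "bnr \<ge> 0" unfolding bnr_def using bnG by (auto simp: ennreal_enn2real_if)
  have realid: "enn2real (Pp \<mu>) - enn2real (Pn \<mu>) = \<mu>\<^sup>2 * ar + bpr - bnr"
    and Ppfin: "Pp \<mu> < top" and Pnfin: "Pn \<mu> < top" for \<mu>
  proof -
    have Pn\<mu>: "Pn \<mu> < top" using Pnbn[of \<mu>] bnG by (meson order_le_less_trans)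
    have rhs: "Pn \<mu> + (ennreal (\<mu>\<^sup>2) * a + bp) < top"
      using Pn\<mu> afin bpfin by (simp add: ennreal_add_less_top ennreal_mult_less_top)
    have Pp\<mu>: "Pp \<mu> < top" using ident[of \<mu>] rhs by (metis ennreal_add_less_top)
    show "Pp \<mu> < top" "Pn \<mu> < top" by fact+
    have "enn2real (Pp \<mu> + bn) = enn2real (Pn \<mu> + (ennreal (\<mu>\<^sup>2) * a + bp))" using ident[of \<mu>] by simp
    then have "enn2real (Pp \<mu>) + bnr = enn2real (Pn \<mu>) + (\<mu>\<^sup>2 * ar + bpr)"
      using Pp\<mu> Pn\<mu> bnG aeq bpeq bneq
      by (simp add: enn2real_plus ennreal_mult_less_top ennreal_add_less_top enn2real_mult ennreal_mult[symmetric])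
    then show "enn2real (Pp \<mu>) - enn2real (Pn \<mu>) = \<mu>\<^sup>2 * ar + bpr - bnr" by simp
  qed
  have s1: "ar + bpr - bnr < 0"
  proof -
    obtain x where x: "Pp 1 = ennreal x" "x \<ge> 0" using Ppfin[of 1] by (cases "Pp 1") auto
    obtain y where y: "Pn 1 = ennreal y" "y \<ge> 0" using Pnfin[of 1] by (cases "Pn 1") auto
    have "x < y" using lt1 x y by (simp add: ennreal_less_iff)
    then have "enn2real (Pp 1) < enn2real (Pn 1)" using x y by simp
    then show ?thesis using realid[of 1] by simp
  qed
  define \<delta> where "\<delta> = min 1 (- (ar + bpr - bnr) / (3*ar + 1))"
  have \<delta>: "\<delta> > 0" "\<delta> \<le> 1" unfolding \<delta>_def using s1 aeq(2) by auto
  have good: "\<mu>\<^sup>2 * ar + bpr - bnr < 0" if "0 < \<mu>" "\<mu> < 1 + \<delta>" for \<mu>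
  proof -
    have "\<mu>\<^sup>2 \<le> (1+\<delta>)\<^sup>2" using that by (intro power_mono) auto
    also have "\<dots> \<le> 1 + 3*\<delta>" using \<delta> by (simp add: power2_eq_square algebra_simps mult_le_one)
    finally have "\<mu>\<^sup>2 * ar \<le> (1 + 3*\<delta>) * ar" using aeq(2) by (rule mult_right_mono)
    moreover have "3*\<delta>*ar < - (ar + bpr - bnr)"
    proof -
      have "\<delta> \<le> - (ar + bpr - bnr) / (3*ar + 1)" unfolding \<delta>_def by simp
      then have "\<delta> * (3*ar+1) \<le> - (ar + bpr - bnr)" using aeq(2) by (simp add: pos_le_divide_eq)
      then show ?thesis using \<delta>(1) by (simp add: algebra_simps)
    qed
    ultimately show ?thesis by (simp add: algebra_simps)
  qed
  show ?thesis
  proof (intro exI[of _ \<delta>] conjI allI impI \<delta>(1))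
    fix \<mu> :: real assume m: "0 < \<mu> \<and> \<mu> < 1 + \<delta>"
    then have m0: "\<mu> > 0" by simp
    have ppr: "Pp \<mu> = ennreal (enn2real (Pp \<mu>))" "enn2real (Pp \<mu>) \<ge> 0"
      using Ppfin[of \<mu>] by (auto simp: ennreal_enn2real_if)
    have pnr: "Pn \<mu> = ennreal (enn2real (Pn \<mu>))" "enn2real (Pn \<mu>) \<ge> 0"
      using Pnfin[of \<mu>] by (auto simp: ennreal_enn2real_if)
    have ltr: "enn2real (Pp \<mu>) < enn2real (Pn \<mu>)" using realid[of \<mu>] good[of \<mu>] m by simp
    have integ: "\<And>x. ((1/2) * (norm (\<mu> *\<^sub>R V' (\<mu>*x)))\<^sup>2 + W (V (\<mu>*x))) * exp ((\<mu>*c) * x) = F \<mu> (\<mu>*x)"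
      unfolding F_def p_def w_def using m0 by (auto simp: algebra_simps power_mult_distrib)
    have sc1: "Pp \<mu> = ennreal \<mu> * (\<integral>\<^sup>+x. ennreal (max 0 (F \<mu> (0 + \<mu>*x))) \<partial>lebesgue)"
    proof -
      have "(\<lambda>y. ennreal (max 0 (F \<mu> y))) \<in> borel_measurable lebesgue" by measurable
      from nn_integral_real_affine_lebesgue[OF this, of \<mu> 0] m0 show ?thesis unfolding Pp_def by simp
    qed
    have sc2: "Pn \<mu> = ennreal \<mu> * (\<integral>\<^sup>+x. ennreal (max 0 (- F \<mu> (0 + \<mu>*x))) \<partial>lebesgue)"
    proof -
      have "(\<lambda>y. ennreal (max 0 (- F \<mu> y))) \<in> borel_measurable lebesgue" by measurable
      from nn_integral_real_affine_lebesgue[OF this, of \<mu> 0] m0 show ?thesis unfolding Pn_def by simp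
    qed
    have z1: "(\<integral>\<^sup>+x. ennreal (max 0 (F \<mu> (\<mu>*x))) \<partial>lborel) = ennreal (enn2real (Pp \<mu>) / \<mu>)"
      using ennreal_div_aux[OF _ m0 ppr(2), of "\<integral>\<^sup>+x. ennreal (max 0 (F \<mu> (0 + \<mu>*x))) \<partial>lebesgue"] sc1 ppr(1)
      by (simp add: nn_integral_completion)
    have z2: "(\<integral>\<^sup>+x. ennreal (max 0 (- F \<mu> (\<mu>*x))) \<partial>lborel) = ennreal (enn2real (Pn \<mu>) / \<mu>)"
      using ennreal_div_aux[OF _ m0 pnr(2), of "\<integral>\<^sup>+x. ennreal (max 0 (- F \<mu> (0 + \<mu>*x))) \<partial>lebesgue"] sc2 pnr(1)
      by (simp add: nn_integral_completion)
    have "energy W (\<mu>*c) (\<lambda>x. V (\<mu>*x)) (\<lambda>x. \<mu> *\<^sub>R V' (\<mu>*x))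
        = enn2ereal (\<integral>\<^sup>+x. ennreal (max 0 (F \<mu> (\<mu>*x))) \<partial>lborel) - enn2ereal (\<integral>\<^sup>+x. ennreal (max 0 (- F \<mu> (\<mu>*x))) \<partial>lborel)"
      unfolding energy_def Let_def by (simp only: integ)
    also have "\<dots> < 0" unfolding z1 z2
      by (rule ereal_neg_aux[OF order_refl order_refl]) (use ppr(2) ltr m0 in \<open>auto simp: divide_strict_right_mono\<close>)
    finally show "energy W (\<mu>*c) (\<lambda>x. V (\<mu>*x)) (\<lambda>x. \<mu> *\<^sub>R V' (\<mu>*x)) < 0" .
  qed
qed



lemma mono_lim:
  fixes g :: "real \<Rightarrow> real"
  assumes a0: "\<alpha>0 > 0" and mono: "\<And>a b. 0 < a \<Longrightarrow> a \<le> b \<Longrightarrow> b \<le> \<alpha>0 \<Longrightarrow> g b \<le> g a"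
    and bnd: "\<And>a. 0 < a \<Longrightarrow> a \<le> \<alpha>0 \<Longrightarrow> g a \<le> B"
  shows "(g \<longlongrightarrow> Sup (g ` {0<..\<alpha>0})) (at_right 0)"
proof (rule order_tendstoI)
  have ne: "g ` {0<..\<alpha>0} \<noteq> {}" using a0 by auto
  have bdd: "bdd_above (g ` {0<..\<alpha>0})" using bnd by (auto intro!: bdd_aboveI)
  fix a assume "a < Sup (g ` {0<..\<alpha>0})"
  then obtain x where x: "x \<in> {0<..\<alpha>0}" "a < g x" using less_cSup_iff[OF ne bdd] by auto
  show "eventually (\<lambda>y. a < g y) (at_right 0)"
    unfolding eventually_at_right_field
  proof (intro exI[of _ x] conjI allI impI)
    show "x > 0" using x by simp
    fix y :: real assume "y > 0" "y < x"
    then have "g x \<le> g y" using mono x by auto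
    then show "a < g y" using x by simp
  qed
next
  have ne: "g ` {0<..\<alpha>0} \<noteq> {}" using a0 by auto
  have bdd: "bdd_above (g ` {0<..\<alpha>0})" using bnd by (auto intro!: bdd_aboveI)
  fix a assume a: "Sup (g ` {0<..\<alpha>0}) < a"
  show "eventually (\<lambda>y. g y < a) (at_right 0)"
    unfolding eventually_at_right_field
  proof (intro exI[of _ \<alpha>0] conjI allI impI a0)
    fix y :: real assume "y > 0" "y < \<alpha>0"
    then have "g y \<le> Sup (g ` {0<..\<alpha>0})" using bdd by (intro cSup_upper) auto
    then show "g y < a" using a by simp
  qed
qed

theorem mainTheorem14:
  fixes W :: "'a::euclidean_space \<Rightarrow> real"
    and am ap :: 'a
    and Cm Cp :: "real \<Rightarrow> 'a set"
    and \<alpha>0 c0 R0 r0 :: real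
  assumes W_C2: "C2 W"
    and min_am: "\<forall>u. W am \<le> W u"
    and min_ap: "\<exists>\<epsilon>>0. \<forall>u\<in>ball ap \<epsilon>. W ap \<le> W u"
    and W_am: "W am < 0" and W_ap: "W ap = 0"
    and \<alpha>0_pos: "\<alpha>0 > 0"
    and sets: "\<forall>\<alpha>\<in>{0<..\<alpha>0}.
        W -` {\<alpha>} = frontier (Cm \<alpha>) \<union> frontier (Cp \<alpha>)
      \<and> {u. W u \<le> \<alpha>} = Cm \<alpha> \<union> Cp \<alpha>
      \<and> Cm \<alpha> \<inter> Cp \<alpha> = {}
      \<and> compact (Cm \<alpha>) \<and> compact (Cp \<alpha>) \<and> convex (Cm \<alpha>) \<and> convex (Cp \<alpha>)
      \<and> C2_boundary (Cm \<alpha>) \<and> C2_boundary (Cp \<alpha>)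
      \<and> am \<in> Cm \<alpha> \<and> ap \<in> Cp \<alpha>"
    and c0_pos: "c0 > 0"
    and normal: "\<forall>p n. outward_normal (connected_component_set {u. W u \<le> 0} am) p n
                    \<longrightarrow> grad W p \<bullet> n \<ge> c0"
    and convex0: "\<forall>p\<in>frontier (connected_component_set {u. W u \<le> 0} am).
                    \<forall>v. v \<bullet> hess W p v \<ge> c0 * (norm v)\<^sup>2"
    and radial_m: "\<forall>\<xi> r. norm \<xi> = 1 \<and> r > 0 \<and> am + r *\<^sub>R \<xi> \<in> Cm \<alpha>0
                    \<longrightarrow> deriv (\<lambda>s. W (am + s *\<^sub>R \<xi>)) r > 0"
    and R0_pos: "R0 > 0"
    and h: "\<forall>\<xi> r. norm \<xi> = 1 \<and> r \<in> {0<..<R0} \<longrightarrow>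
              deriv (\<lambda>s. W (am + s *\<^sub>R \<xi>)) r > 0 \<and> deriv (\<lambda>s. W (ap + s *\<^sub>R \<xi>)) r > 0"
    and r0: "0 < r0" "r0 < R0"
    and r0_p: "\<forall>u\<in>cball ap r0. W u \<ge> 0"
    and r0_m: "\<forall>u\<in>cball am r0. W u < 0"
  defines "C \<equiv> {c::real. c > 0 \<and> (\<exists>L\<ge>1. inf_energy W am ap r0 c L < 0)}"
    and "d0 \<equiv> Lim (at_right 0) (\<lambda>\<alpha>. setdist (Cm \<alpha>) (cball ap r0))"
  shows "open C \<and> C \<noteq> {} \<and> bdd_above C \<and> Sup C \<le> sqrt (2 * negpart (W am)) / d0"
proof -
  have Wc: "continuous_on UNIV W" by (rule C2_cont[OF W_C2])
  have hp: "\<forall>\<xi> r. norm \<xi> = 1 \<and> r \<in> {0<..<R0} \<longrightarrow> deriv (\<lambda>s. W (ap + s *\<^sub>R \<xi>)) r > 0"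
    using h by blast
  obtain m where m: "m > 0" "\<forall>u\<in>sphere ap r0. m \<le> W u"
    using sphere_min[OF W_C2 r0 W_ap hp] by blast
  interpret G: geo W am ap Cm Cp \<alpha>0 m r0
    by unfold_locales (use sets m r0_p W_am \<alpha>0_pos r0 in auto)
  define g where "g \<alpha> = setdist (Cm \<alpha>) (cball ap r0)" for \<alpha>
  define K0 where "K0 = sqrt (2 * negpart (W am))"
  define \<alpha>1 where "\<alpha>1 = min \<alpha>0 (m/2)"
  have \<alpha>1: "0 < \<alpha>1" "\<alpha>1 \<le> \<alpha>0" "\<alpha>1 < m" unfolding \<alpha>1_def using \<alpha>0_pos m by auto
  have g1: "g \<alpha>1 > 0" unfolding g_def by (rule G.Cm_disj[OF \<alpha>1])
  have amC: "am \<in> Cm \<alpha>" if "0 < \<alpha>" "\<alpha> \<le> \<alpha>0" for \<alpha> using sets that by auto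
  have gmono: "g b \<le> g a" if "0 < a" "a \<le> b" "b \<le> \<alpha>0" for a b
    unfolding g_def
    by (rule setdist_subset_left) (use amC[of a] that G.nested[OF that] in auto)
  have gbnd: "g a \<le> dist am ap" if "0 < a" "a \<le> \<alpha>0" for a
    unfolding g_def by (rule setdist_le_dist) (use amC[OF that] r0 in auto)
  define D where "D = Sup (g ` {0<..\<alpha>0})"
  have lim: "(g \<longlongrightarrow> D) (at_right 0)" unfolding D_def
    by (rule mono_lim[OF \<alpha>0_pos gmono gbnd]) auto
  have d0D: "d0 = D" unfolding d0_def using tendsto_Lim[OF trivial_limit_at_right_real lim]
    unfolding g_def by simp
  have bddg: "bdd_above (g ` {0<..\<alpha>0})" using gbnd by (auto intro!: bdd_aboveI)
  have D1: "g \<alpha>1 \<le> D" unfolding D_def using \<alpha>1 bddg by (intro cSup_upper) auto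
  have Dpos: "D > 0" using g1 D1 by simp
  have cle: "c \<le> K0 / D" if cC: "c \<in> C" for c
  proof (rule ccontr)
    assume "\<not> c \<le> K0 / D"
    then have lt: "K0 / D < c" by simp
    have cpos: "c > 0" using cC unfolding C_def by simp
    obtain L where L: "L \<ge> 1" "inf_energy W am ap r0 c L < 0" using cC unfolding C_def by blast
    have "K0 / c < D" using lt cpos Dpos by (simp add: field_simps)
    then obtain \<alpha>2 where a2: "\<alpha>2 \<in> {0<..\<alpha>0}" "K0 / c < g \<alpha>2"
      unfolding D_def using less_cSup_iff[OF _ bddg] \<alpha>0_pos by auto
    define \<alpha>3 where "\<alpha>3 = min \<alpha>2 \<alpha>1"
    have a3: "0 < \<alpha>3" "\<alpha>3 \<le> \<alpha>2" "\<alpha>3 \<le> \<alpha>1" "\<alpha>3 \<le> \<alpha>0" unfolding \<alpha>3_def using a2 \<alpha>1 by auto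
    have g3: "g \<alpha>2 \<le> g \<alpha>3" using gmono[OF a3(1) a3(2)] a2 by simp
    have g3': "g \<alpha>1 \<le> g \<alpha>3" using gmono[OF a3(1) a3(3) \<alpha>1(2)] .
    have dpos: "g \<alpha>3 > 0" using g1 g3' by simp
    have cd: "K0 \<le> c * g \<alpha>3"
    proof -
      have "K0 / c < g \<alpha>3" using a2 g3 by simp
      then show ?thesis using cpos by (simp add: field_simps)
    qed
    have cl: "closed (Cm \<alpha>3)" using sets a3 by (auto intro: compact_imp_closed)
    have "inf_energy W am ap r0 c L \<ge> 0"
      unfolding inf_energy_def
    proof (rule Inf_greatest, clarify)
      fix V V' :: "real \<Rightarrow> 'a" assume HV: "H1loc V V'" "V \<in> XL am ap r0 L"
      show "0 \<le> energy W c V V'"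
      proof (rule lower_bound[OF HV cpos min_am r0_p cl _ dpos])
        show "\<forall>u. W u < 0 \<longrightarrow> u \<in> Cm \<alpha>3" using G.neg_in_Cm a3 by blast
        show "\<forall>u\<in>Cm \<alpha>3. \<forall>v\<in>cball ap r0. g \<alpha>3 \<le> dist u v" unfolding g_def
          using setdist_le_dist by blast
        show "sqrt (2 * negpart (W am)) \<le> c * g \<alpha>3" using cd unfolding K0_def .
      qed
    qed
    then show False using L(2) by simp
  qed
  have ne: "C \<noteq> {}"
  proof -
    obtain c where "c > 0" "inf_energy W am ap r0 c 1 < 0"
      using exists_neg[OF Wc W_am W_ap less_imp_le[OF r0(1)]] by blast
    then have "c \<in> C" unfolding C_def by auto
    then show ?thesis by blast
  qed
  have bdd: "bdd_above C" using cle by (intro bdd_aboveI) blast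
  have sup: "Sup C \<le> K0 / D" using ne cle by (intro cSup_least) auto
  have op: "open C"
    unfolding open_dist
  proof
    fix c assume cC: "c \<in> C"
    have cpos: "c > 0" using cC unfolding C_def by simp
    obtain L where L: "L \<ge> 1" "inf_energy W am ap r0 c L < 0" using cC unfolding C_def by blast
    then obtain E where "E \<in> {energy W c V V' | V V'. H1loc V V' \<and> V \<in> XL am ap r0 L}" "E < 0"
      unfolding inf_energy_def using Inf_less_iff by blast
    then obtain V V' where VV: "H1loc V V'" "V \<in> XL am ap r0 L" "energy W c V V' < 0" by blast
    obtain \<delta> where \<delta>: "\<delta> > 0" and st: "\<forall>\<mu>. 0 < \<mu> \<and> \<mu> < 1 + \<delta> \<longrightarrow>
        energy W (\<mu>*c) (\<lambda>x. V (\<mu>*x)) (\<lambda>x. \<mu> *\<^sub>R V' (\<mu>*x)) < 0"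
      using open_step[OF VV(1,2) cpos VV(3) min_am r0_p Wc] by blast
    define e where "e = c * min \<delta> (1/2)"
    have epos: "e > 0" unfolding e_def using cpos \<delta> by simp
    show "\<exists>e>0. \<forall>y. dist y c < e \<longrightarrow> y \<in> C"
    proof (intro exI[of _ e] conjI allI impI epos)
      fix c' assume "dist c' c < e"
      then have dc: "\<bar>c' - c\<bar> < c * min \<delta> (1/2)" unfolding e_def dist_real_def .
      define \<mu> where "\<mu> = c' / c"
      have c'eq: "c' = \<mu> * c" unfolding \<mu>_def using cpos by simp
      have "\<bar>\<mu> - 1\<bar> < min \<delta> (1/2)"
      proof -
        have "\<bar>\<mu> - 1\<bar> = \<bar>c' - c\<bar> / c" unfolding \<mu>_def using cpos by (simp add: field_simps abs_div)
        moreover have "\<bar>c' - c\<bar> < min \<delta> (1/2) * c" using dc by (simp only: mult.commute)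
        then have "\<bar>c' - c\<bar> / c < min \<delta> (1/2)" using pos_divide_less_eq[OF cpos] by blast
        ultimately show ?thesis by simp
      qed
      then have "\<bar>\<mu> - 1\<bar> < \<delta>" "\<bar>\<mu> - 1\<bar> < 1/2" by auto
      then have mu: "\<mu> > 1/2" "\<mu> < 1 + \<delta>" unfolding abs_less_iff by linarith+
      then have mpos: "\<mu> > 0" by simp
      have en: "energy W c' (\<lambda>x. V (\<mu>*x)) (\<lambda>x. \<mu> *\<^sub>R V' (\<mu>*x)) < 0"
        using st mpos mu unfolding c'eq by blast
      define L' where "L' = max 1 (L / \<mu>)"
      have L'1: "L' \<ge> 1" unfolding L'_def by simp
      have XU: "(\<lambda>x. V (\<mu>*x)) \<in> XL am ap r0 L'"
      proof -
        have VX: "\<forall>x\<ge>L. norm (V x - ap) \<le> r0" "\<forall>x\<le>-L. norm (V x - am) \<le> r0"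
          using VV(2) unfolding XL_def by auto
        have "\<mu> * x \<ge> L" if "x \<ge> L'" for x
        proof -
          have "x \<ge> L / \<mu>" using that unfolding L'_def by simp
          then show ?thesis using mpos by (simp add: field_simps)
        qed
        moreover have "\<mu> * x \<le> -L" if "x \<le> -L'" for x
        proof -
          have "x \<le> - (L / \<mu>)" using that unfolding L'_def by simp
          then show ?thesis using mpos by (simp add: field_simps)
        qed
        ultimately show ?thesis unfolding XL_def using VX by auto
      qed
      have HU: "H1loc (\<lambda>x. V (\<mu>*x)) (\<lambda>x. \<mu> *\<^sub>R V' (\<mu>*x))" by (rule H1loc_scale[OF mpos VV(1)])
      have "inf_energy W am ap r0 c' L' \<le> energy W c' (\<lambda>x. V (\<mu>*x)) (\<lambda>x. \<mu> *\<^sub>R V' (\<mu>*x))"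
        unfolding inf_energy_def using HU XU by (intro Inf_lower) blast
      then have "inf_energy W am ap r0 c' L' < 0" using en by simp
      moreover have "c' > 0" using c'eq mpos cpos by simp
      ultimately show "c' \<in> C" unfolding C_def using L'1 by blast
    qed
  qed
  show ?thesis using op ne bdd sup d0D unfolding K0_def by simp
qed


end
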